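(* Let $G=(V,E)$ be a connected quartic graph which is Bakry-\'Emery curvature sharp at every vertex and in which every edge is contained in exactly one triangle. Then $G$ is isomorphic to the Cartesian product $K_3\times K_3$.
   Context: $\Delta f(x)=\sum_{y\sim x}(f(y)-f(x))$, $2\Gamma(f,g)=\Delta(fg)-f\Delta g-g\Delta f$, $2\Gamma_2(f,g)=\Delta\Gamma(f,g)-\Gamma(f,\Delta g)-\Gamma(g,\Delta f)$; $\mathcal K_\infty(x)$ is the supremum of $K$ with $\Gamma_2(f,f)(x)\ge K\Gamma(f,f)(x)$ for all $f:V\to\mathbb R$. A vertex $x$ of a $D$-regular graph is curvature sharp if $\mathcal K_\infty(x)=2+\#_\Delta(x)/D$, where $\#_\Delta(x)$ is the number of triangles containing $x$. *)

theory Defs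
  imports Complex_Main
begin

definition simple_graph :: "'a set \<Rightarrow> ('a \<Rightarrow> 'a \<Rightarrow> bool) \<Rightarrow> bool" where
  "simple_graph V adj \<longleftrightarrow>
     (\<forall>x y. adj x y \<longrightarrow> x \<in> V \<and> y \<in> V) \<and>
     (\<forall>x y. adj x y \<longrightarrow> adj y x) \<and>
     (\<forall>x. \<not> adj x x)"

definition nbrs :: "'a set \<Rightarrow> ('a \<Rightarrow> 'a \<Rightarrow> bool) \<Rightarrow> 'a \<Rightarrow> 'a set" where
  "nbrs V adj x = {y \<in> V. adj x y}"

definition regular :: "'a set \<Rightarrow> ('a \<Rightarrow> 'a \<Rightarrow> bool) \<Rightarrow> nat \<Rightarrow> bool" where
  "regular V adj D \<longleftrightarrow> (\<forall>x\<in>V. finite (nbrs V adj x) \<and> card (nbrs V adj x) = D)"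

definition connected_graph :: "'a set \<Rightarrow> ('a \<Rightarrow> 'a \<Rightarrow> bool) \<Rightarrow> bool" where
  "connected_graph V adj \<longleftrightarrow> V \<noteq> {} \<and>
     (\<forall>x\<in>V. \<forall>y\<in>V. (\<lambda>u v. u \<in> V \<and> v \<in> V \<and> adj u v)\<^sup>*\<^sup>* x y)"

definition lap :: "'a set \<Rightarrow> ('a \<Rightarrow> 'a \<Rightarrow> bool) \<Rightarrow> ('a \<Rightarrow> real) \<Rightarrow> 'a \<Rightarrow> real" where
  "lap V adj f x = (\<Sum>y\<in>nbrs V adj x. f y - f x)"

definition Gam :: "'a set \<Rightarrow> ('a \<Rightarrow> 'a \<Rightarrow> bool) \<Rightarrow> ('a \<Rightarrow> real) \<Rightarrow> ('a \<Rightarrow> real) \<Rightarrow> 'a \<Rightarrow> real" where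
  "Gam V adj f g x =
     (lap V adj (\<lambda>z. f z * g z) x - f x * lap V adj g x - g x * lap V adj f x) / 2"

definition Gam2 :: "'a set \<Rightarrow> ('a \<Rightarrow> 'a \<Rightarrow> bool) \<Rightarrow> ('a \<Rightarrow> real) \<Rightarrow> ('a \<Rightarrow> real) \<Rightarrow> 'a \<Rightarrow> real" where
  "Gam2 V adj f g x =
     (lap V adj (\<lambda>z. Gam V adj f g z) x - Gam V adj f (lap V adj g) x
       - Gam V adj g (lap V adj f) x) / 2"

definition K_inf :: "'a set \<Rightarrow> ('a \<Rightarrow> 'a \<Rightarrow> bool) \<Rightarrow> 'a \<Rightarrow> real" where
  "K_inf V adj x = Sup {K. \<forall>f. Gam2 V adj f f x \<ge> K * Gam V adj f f x}"

definition num_triangles :: "'a set \<Rightarrow> ('a \<Rightarrow> 'a \<Rightarrow> bool) \<Rightarrow> 'a \<Rightarrow> nat" where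
  "num_triangles V adj x =
     card {{y, z} | y z. y \<in> nbrs V adj x \<and> z \<in> nbrs V adj x \<and> adj y z}"

definition curvature_sharp :: "'a set \<Rightarrow> ('a \<Rightarrow> 'a \<Rightarrow> bool) \<Rightarrow> nat \<Rightarrow> 'a \<Rightarrow> bool" where
  "curvature_sharp V adj D x \<longleftrightarrow>
     K_inf V adj x = 2 + real (num_triangles V adj x) / real D"

definition edge_in_unique_triangle :: "'a set \<Rightarrow> ('a \<Rightarrow> 'a \<Rightarrow> bool) \<Rightarrow> bool" where
  "edge_in_unique_triangle V adj \<longleftrightarrow>
     (\<forall>x y. adj x y \<longrightarrow> card {z \<in> V. adj x z \<and> adj y z} = 1)"

definition K3K3_V :: "(nat \<times> nat) set" where
  "K3K3_V = {0..2} \<times> {0..2}"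

definition K3K3_adj :: "nat \<times> nat \<Rightarrow> nat \<times> nat \<Rightarrow> bool" where
  "K3K3_adj p q \<longleftrightarrow> (fst p = fst q \<and> snd p \<noteq> snd q) \<or> (snd p = snd q \<and> fst p \<noteq> fst q)"

definition graph_iso :: "'a set \<Rightarrow> ('a \<Rightarrow> 'a \<Rightarrow> bool) \<Rightarrow> 'b set \<Rightarrow> ('b \<Rightarrow> 'b \<Rightarrow> bool) \<Rightarrow> bool" where
  "graph_iso V adj W adj' \<longleftrightarrow>
     (\<exists>f. bij_betw f V W \<and> (\<forall>x\<in>V. \<forall>y\<in>V. adj x y \<longleftrightarrow> adj' (f x) (f y)))"

end

theory Submission imports Defs begin

locale G =
  fixes V :: "'a set" and adj :: "'a \<Rightarrow> 'a \<Rightarrow> bool"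
  assumes sg: "simple_graph V adj"
    and reg: "regular V adj 4"
    and ut: "edge_in_unique_triangle V adj"
begin

abbreviation "N \<equiv> nbrs V adj"

lemma adjV: "adj x y \<Longrightarrow> x \<in> V \<and> y \<in> V"
  using sg unfolding simple_graph_def by blast
lemma sym: "adj x y \<Longrightarrow> adj y x"
  using sg unfolding simple_graph_def by blast
lemma irr[simp]: "\<not> adj x x"
  using sg unfolding simple_graph_def by blast
lemma memN: "y \<in> N x \<longleftrightarrow> adj x y"
  using adjV unfolding nbrs_def by blast
lemma finN[simp]: "finite (N x)"
proof (cases "x \<in> V")
  case True then show ?thesis using reg unfolding regular_def by blast
next
  case False then have "N x = {}" using adjV memN by blast
  then show ?thesis by simp
qed
lemma cardN: "x \<in> V \<Longrightarrow> card (N x) = 4"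
  using reg unfolding regular_def by blast

lemma uniq_common:
  assumes "adj u v" "adj u w1" "adj v w1" "adj u w2" "adj v w2"
  shows "w1 = w2"
proof -
  have "card {z \<in> V. adj u z \<and> adj v z} = 1" using ut assms(1) unfolding edge_in_unique_triangle_def by blast
  then obtain w where w: "{z \<in> V. adj u z \<and> adj v z} = {w}" by (rule card_1_singletonE)
  have "w1 \<in> {z \<in> V. adj u z \<and> adj v z}" "w2 \<in> {z \<in> V. adj u z \<and> adj v z}"
    using assms adjV by auto
  then show ?thesis using w by auto
qed

lemma ex_common:
  assumes "adj u v" obtains w where "adj u w" "adj v w"
proof -
  have "card {z \<in> V. adj u z \<and> adj v z} = 1" using ut assms(1) unfolding edge_in_unique_triangle_def by blast
  then obtain w where w: "{z \<in> V. adj u z \<and> adj v z} = {w}" by (rule card_1_singletonE)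
  then show ?thesis using that by auto
qed

lemma Gam_eq: "Gam V adj f g y = (\<Sum>z\<in>N y. (f z - f y)*(g z - g y))/2"
proof -
  have "(\<Sum>z\<in>N y. (f z - f y)*(g z - g y)) =
        (\<Sum>z\<in>N y. (f z * g z - f y * g y) - f y * (g z - g y) - g y * (f z - f y))"
    by (rule sum.cong) (auto simp: algebra_simps)
  also have "\<dots> = lap V adj (\<lambda>z. f z * g z) y - f y * lap V adj g y - g y * lap V adj f y"
    unfolding lap_def by (simp add: sum_subtractf sum_distrib_left right_diff_distrib)
  finally show ?thesis unfolding Gam_def by simp
qed

lemma Gam2_eq:
  assumes x: "x \<in> V"
  shows "4 * Gam2 V adj f f x = (\<Sum>y\<in>N x. \<Sum>z\<in>N y. (f z - 2*f y + f x)^2)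
      - 8 * (\<Sum>y\<in>N x. (f y - f x)^2) + 2 * (\<Sum>y\<in>N x. f y - f x)^2"
proof -
  define L where "L = lap V adj f"
  define A where "A y = (\<Sum>z\<in>N y. (f z - f y)^2)" for y
  define C where "C y = (\<Sum>z\<in>N y. (f z - 2*f y + f x)^2)" for y
  have L: "L y = (\<Sum>z\<in>N y. f z - f y)" for y unfolding L_def lap_def by simp
  have G: "2 * Gam V adj f f y = A y" for y unfolding Gam_eq A_def by (simp add: power2_eq_square)
  have GL: "2 * Gam V adj f L x = (\<Sum>y\<in>N x. (f y - f x)*(L y - L x))" unfolding Gam_eq by simp
  have GL': "Gam V adj L f x = Gam V adj f L x" unfolding Gam_eq by (simp add: mult.commute)
  have lapG: "lap V adj (\<lambda>z. Gam V adj f f z) x = (\<Sum>y\<in>N x. Gam V adj f f y - Gam V adj f f x)"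
    unfolding lap_def by simp
  have Cy: "C y = A y - 2*(f y - f x)*L y + 4*(f y - f x)^2" if "y \<in> N x" for y
  proof -
    have yV: "y \<in> V" using that memN adjV by blast
    have "C y = (\<Sum>z\<in>N y. (f z - f y)^2 - 2*(f y - f x)*(f z - f y) + (f y - f x)^2)"
      unfolding C_def by (rule sum.cong) (auto simp: power2_eq_square algebra_simps)
    also have "\<dots> = A y - 2*(f y - f x)*L y + real (card (N y)) * (f y - f x)^2"
      unfolding A_def L by (simp add: sum_subtractf sum.distrib sum_distrib_left right_diff_distrib)
    finally show ?thesis using cardN[OF yV] by simp
  qed
  have sumC: "(\<Sum>y\<in>N x. C y) = (\<Sum>y\<in>N x. A y) - 2*(\<Sum>y\<in>N x. (f y - f x)*L y) + 4*(\<Sum>y\<in>N x. (f y - f x)^2)"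
  proof -
    have "(\<Sum>y\<in>N x. C y) = (\<Sum>y\<in>N x. A y - 2*((f y - f x)*L y) + 4*(f y - f x)^2)"
      by (rule sum.cong) (auto simp: Cy)
    then show ?thesis by (simp add: sum_subtractf sum.distrib sum_distrib_left)
  qed
  have Ax: "A x = (\<Sum>y\<in>N x. (f y - f x)^2)" unfolding A_def by simp
  have s1: "2 * lap V adj (\<lambda>z. Gam V adj f f z) x = (\<Sum>y\<in>N x. A y) - 4 * A x"
  proof -
    have "2 * lap V adj (\<lambda>z. Gam V adj f f z) x = (\<Sum>y\<in>N x. A y - A x)"
      unfolding lapG sum_distrib_left by (rule sum.cong) (auto simp: G[symmetric] algebra_simps)
    then show ?thesis using cardN[OF x] by (simp add: sum_subtractf)
  qed
  have s2: "(\<Sum>y\<in>N x. (f y - f x)*(L y - L x)) = (\<Sum>y\<in>N x. (f y - f x)*L y) - L x * L x"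
  proof -
    have "(\<Sum>y\<in>N x. (f y - f x)*(L y - L x)) = (\<Sum>y\<in>N x. (f y - f x)*L y - L x*(f y - f x))"
      by (rule sum.cong) (auto simp: algebra_simps)
    also have "\<dots> = (\<Sum>y\<in>N x. (f y - f x)*L y) - L x * (\<Sum>y\<in>N x. f y - f x)"
      unfolding sum_distrib_left sum_subtractf[symmetric] by simp
    finally show ?thesis using L[of x] by simp
  qed
  have "4 * Gam2 V adj f f x = 2 * lap V adj (\<lambda>z. Gam V adj f f z) x - 2 * (2 * Gam V adj f L x)"
    unfolding Gam2_def L_def[symmetric] GL' by simp
  also have "\<dots> = (\<Sum>y\<in>N x. C y) - 8 * (\<Sum>y\<in>N x. (f y - f x)^2) + 2 * (L x)^2"
    unfolding s1 GL s2 sumC Ax by (simp add: power2_eq_square)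
  finally show ?thesis unfolding C_def L by simp
qed

lemma Gam_eq2: "2 * Gam V adj f f x = (\<Sum>y\<in>N x. (f y - f x)^2)"
  unfolding Gam_eq by (simp add: power2_eq_square)


lemma Gam_nonneg: "0 \<le> Gam V adj f f x"
  using Gam_eq2[of f x] sum_nonneg[of "N x" "\<lambda>y. (f y - f x)^2"] by simp

lemma Gam2_lb:
  assumes x: "x \<in> V"
  shows "-2 * Gam V adj f f x \<le> Gam2 V adj f f x"
proof -
  have "(\<Sum>y\<in>N x. 4 * (f y - f x)^2) \<le> (\<Sum>y\<in>N x. \<Sum>z\<in>N y. (f z - 2*f y + f x)^2)"
  proof (rule sum_mono)
    fix y assume "y \<in> N x"
    then have "x \<in> N y" using memN sym by blast
    then have "(f x - 2*f y + f x)^2 \<le> (\<Sum>z\<in>N y. (f z - 2*f y + f x)^2)"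
      by (intro member_le_sum) auto
    moreover have "(f x - 2*f y + f x)^2 = 4 * (f y - f x)^2" by (simp add: power2_eq_square algebra_simps)
    ultimately show "4 * (f y - f x)^2 \<le> (\<Sum>z\<in>N y. (f z - 2*f y + f x)^2)" by simp
  qed
  then have "4 * (\<Sum>y\<in>N x. (f y - f x)^2) \<le> (\<Sum>y\<in>N x. \<Sum>z\<in>N y. (f z - 2*f y + f x)^2)"
    by (simp add: sum_distrib_left)
  moreover have "0 \<le> 2 * (\<Sum>y\<in>N x. f y - f x)^2" by simp
  ultimately show ?thesis using Gam2_eq[OF x, of f] Gam_eq2[of f x] by linarith
qed

lemma sharp_ineq:
  assumes x: "x \<in> V" and K: "K_inf V adj x = 5/2"
  shows "5/2 * Gam V adj f f x \<le> Gam2 V adj f f x"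
proof (rule ccontr)
  assume c: "\<not> ?thesis"
  define S where "S = {K. \<forall>f. Gam2 V adj f f x \<ge> K * Gam V adj f f x}"
  have pos: "Gam V adj f f x > 0"
  proof -
    have "Gam V adj f f x \<noteq> 0" using c Gam2_lb[OF x, of f] by auto
    then show ?thesis using Gam_nonneg[of f x] by linarith
  qed
  define cc where "cc = Gam2 V adj f f x / Gam V adj f f x"
  have cc: "cc < 5/2" using c pos unfolding cc_def by (simp add: divide_less_eq)
  have "-2 \<in> S" unfolding S_def using Gam2_lb[OF x] by auto
  then have ne: "S \<noteq> {}" by blast
  have "\<forall>k\<in>S. k \<le> cc"
  proof
    fix k assume "k \<in> S"
    then have "k * Gam V adj f f x \<le> Gam2 V adj f f x" unfolding S_def by blast
    then show "k \<le> cc" using pos unfolding cc_def by (simp add: le_divide_eq)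
  qed
  then have "Sup S \<le> cc" using ne by (intro cSup_least) auto
  moreover have "Sup S = 5/2" using K unfolding K_inf_def S_def by simp
  ultimately show False using cc by simp
qed

lemma local_str:
  assumes x: "x \<in> V"
  shows "\<exists>a b c d. N x = {a,b,c,d} \<and> a \<noteq> b \<and> a \<noteq> c \<and> a \<noteq> d \<and> b \<noteq> c \<and> b \<noteq> d \<and> c \<noteq> d
     \<and> adj a b \<and> adj c d \<and> \<not> adj a c \<and> \<not> adj a d \<and> \<not> adj b c \<and> \<not> adj b d"
proof -
  have "card (N x) = 4" using cardN[OF x] .
  then have "N x \<noteq> {}" by auto
  then obtain a where a: "a \<in> N x" by blast
  then have xa: "adj x a" using memN by blast
  obtain b where xb: "adj x b" and ab: "adj a b" using ex_common[OF xa] by blast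
  have b: "b \<in> N x" using xb memN by blast
  have "a \<noteq> b" using ab by auto
  have "card (N x - {a,b}) = 2" using cardN[OF x] a b \<open>a \<noteq> b\<close> by (simp add: card_Diff_subset)
  then obtain c d where cd: "N x - {a,b} = {c,d}" "c \<noteq> d" by (auto simp: card_2_iff)
  then have c: "c \<in> N x" "c \<noteq> a" "c \<noteq> b" and d: "d \<in> N x" "d \<noteq> a" "d \<noteq> b" by auto
  have Nx: "N x = {a,b,c,d}" using cd a b by auto
  have xc: "adj x c" and xd: "adj x d" using c d memN by auto
  have nac: "\<not> adj a c" using uniq_common[OF xa xb ab xc] c by (auto dest: sym)
  have nad: "\<not> adj a d" using uniq_common[OF xa xb ab xd] d by (auto dest: sym)
  have nbc: "\<not> adj b c" using uniq_common[OF xb xa ab[THEN sym] xc] c by (auto dest: sym)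
  have nbd: "\<not> adj b d" using uniq_common[OF xb xa ab[THEN sym] xd] d by (auto dest: sym)
  obtain w where xw: "adj x w" and cw: "adj c w" using ex_common[OF xc] by blast
  have "w \<in> N x" using xw memN by blast
  moreover have "w \<noteq> a" using nac cw sym by blast
  moreover have "w \<noteq> b" using nbc cw sym by blast
  moreover have "w \<noteq> c" using cw by auto
  ultimately have "w = d" using Nx by auto
  then show ?thesis using Nx \<open>a \<noteq> b\<close> c d cd(2) ab cw nac nad nbc nbd by blast
qed

lemma num_tri:
  assumes "N x = {a,b,c,d}" "a \<noteq> b" "a \<noteq> c" "a \<noteq> d" "b \<noteq> c" "b \<noteq> d" "c \<noteq> d"
     "adj a b" "adj c d" "\<not> adj a c" "\<not> adj a d" "\<not> adj b c" "\<not> adj b d"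
  shows "num_triangles V adj x = 2"
proof -
  have na: "\<not> adj c a" "\<not> adj d a" "\<not> adj c b" "\<not> adj d b" using assms(10-13) sym by blast+
  have ba: "adj b a" "adj d c" using assms(8,9) sym by blast+
  have "{{y, z} | y z. y \<in> N x \<and> z \<in> N x \<and> adj y z} = {{a,b},{c,d}}"
  proof
    show "{{y, z} | y z. y \<in> N x \<and> z \<in> N x \<and> adj y z} \<subseteq> {{a,b},{c,d}}"
      using assms(1,10-13) na by (auto simp: insert_commute)
    show "{{a,b},{c,d}} \<subseteq> {{y, z} | y z. y \<in> N x \<and> z \<in> N x \<and> adj y z}"
      using assms(1,8,9) by blast
  qed
  moreover have "{a,b} \<noteq> {c,d}" using assms(3,4) by (auto simp: doubleton_eq_iff)
  ultimately show ?thesis unfolding num_triangles_def by simp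
qed

lemma pair_rest:
  assumes "N u = {v1,v2,w1,w2}" "v1 \<noteq> v2" "v1 \<noteq> w1" "v1 \<noteq> w2" "v2 \<noteq> w1" "v2 \<noteq> w2" "w1 \<noteq> w2"
    "adj v1 v2"
  shows "adj w1 w2"
proof -
  have a: "adj u v1" "adj u v2" "adj u w1" "adj u w2" using assms(1) memN by blast+
  obtain w where uw: "adj u w" and w1w: "adj w1 w" using ex_common[OF a(3)] by blast
  have "w \<in> N u" using uw memN by blast
  moreover have "w \<noteq> w1" using w1w by auto
  moreover have "w \<noteq> v1"
  proof
    assume "w = v1"
    then have "v2 = w1" using uniq_common[OF a(1) a(2) assms(8) a(3)] w1w sym by blast
    then show False using assms(5) by simp
  qed
  moreover have "w \<noteq> v2"
  proof
    assume "w = v2"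
    then have "v1 = w1" using uniq_common[OF a(2) a(1) assms(8)[THEN sym] a(3)] w1w sym by blast
    then show False using assms(3) by simp
  qed
  ultimately have "w = w2" using assms(1) by auto
  then show ?thesis using w1w by simp
qed


lemma ybound:
  assumes y: "y \<in> V" and xy: "adj y x" and yp: "adj y p" and px: "p \<noteq> x"
    and h: "\<And>z. z \<in> N y - {x,p} \<Longrightarrow> 0 \<le> h z \<and> h z \<le> (4::real)"
  shows "(\<Sum>z\<in>N y. h z) \<le> h x + h p + 8"
    and "(\<exists>z\<in>N y - {x,p}. h z = 0) \<Longrightarrow> (\<Sum>z\<in>N y. h z) \<le> h x + h p + 4"
proof -
  define R where "R = N y - {x,p}"
  have xN: "x \<in> N y" and pN: "p \<in> N y" using xy yp memN by auto
  have cR: "card R = 2" unfolding R_def using cardN[OF y] xN pN px by (simp add: card_Diff_subset)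
  have fR: "finite R" unfolding R_def by simp
  have Ny: "N y = insert x (insert p R)" unfolding R_def using xN pN by auto
  have xR: "x \<notin> R" "p \<notin> R" unfolding R_def by auto
  have sumeq: "(\<Sum>z\<in>N y. h z) = h x + h p + (\<Sum>z\<in>R. h z)"
    unfolding Ny using fR xR px by simp
  have "(\<Sum>z\<in>R. h z) \<le> real (card R) * 4" using h unfolding R_def[symmetric] by (intro sum_bounded_above) auto
  then show "(\<Sum>z\<in>N y. h z) \<le> h x + h p + 8" using sumeq cR by simp
  assume "\<exists>z\<in>N y - {x,p}. h z = 0"
  then obtain z0 where z0: "z0 \<in> R" "h z0 = 0" unfolding R_def by blast
  have "(\<Sum>z\<in>R. h z) = h z0 + (\<Sum>z\<in>R - {z0}. h z)" using z0 fR by (simp add: sum.remove)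
  moreover have "card (R - {z0}) = 1" using cR z0 by simp
  moreover have "(\<Sum>z\<in>R - {z0}. h z) \<le> real (card (R - {z0})) * 4"
    using h unfolding R_def[symmetric] by (intro sum_bounded_above) auto
  ultimately have "(\<Sum>z\<in>R. h z) \<le> 4" using z0 by simp
  then show "(\<Sum>z\<in>N y. h z) \<le> h x + h p + 4" using sumeq by simp
qed

lemma test:
  assumes x: "x \<in> V" and Nx: "N x = {a,b,c,d}" and dis: "a \<noteq> b" "a \<noteq> c" "a \<noteq> d" "b \<noteq> c" "b \<noteq> d" "c \<noteq> d"
     and e: "adj a b" "adj c d" and ne: "\<not> adj a c" "\<not> adj a d" "\<not> adj b c" "\<not> adj b d"
     and sh: "\<And>f. 5/2 * Gam V adj f f x \<le> Gam2 V adj f f x"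
     and z0: "adj a z0" "z0 \<noteq> x" "z0 \<noteq> b"
  shows "adj z0 c \<or> adj z0 d"
proof (rule ccontr)
  assume nz: "\<not> ?thesis"
  have xa: "adj x a" "adj x b" "adj x c" "adj x d" using Nx memN by auto
  have xs: "x \<noteq> a" "x \<noteq> b" "x \<noteq> c" "x \<noteq> d" using xa by auto
  define f :: "'a \<Rightarrow> real" where "f v = (if v = x then 0 else if v = a \<or> v = b then 1 else if v = c \<or> v = d then -1
     else if (adj v a \<or> adj v b) \<and> (adj v c \<or> adj v d) then 0 else if adj v a \<or> adj v b then 2
     else if adj v c \<or> adj v d then -2 else 0)" for v
  have fx: "f x = 0" "f a = 1" "f b = 1" "f c = -1" "f d = -1" unfolding f_def using xs dis by auto
  have fab: "f z = (if adj z c \<or> adj z d then 0 else 2)" if "adj y z" "y = a \<or> y = b" "z \<noteq> x" "z \<noteq> a" "z \<noteq> b" for y z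
  proof -
    have "z \<noteq> c" "z \<noteq> d" using that ne by auto
    moreover have "adj z a \<or> adj z b" using that sym by blast
    ultimately show ?thesis unfolding f_def using that by auto
  qed
  have fcd: "f z = (if adj z a \<or> adj z b then 0 else -2)" if "adj y z" "y = c \<or> y = d" "z \<noteq> x" "z \<noteq> c" "z \<noteq> d" for y z
  proof -
    have "z \<noteq> a" "z \<noteq> b" using that ne sym by blast+
    moreover have "adj z c \<or> adj z d" using that sym by blast
    ultimately show ?thesis unfolding f_def using that by auto
  qed
  define C where "C y = (\<Sum>z\<in>N y. (f z - 2*f y + f x)^2)" for y
  have V: "a \<in> V" "b \<in> V" "c \<in> V" "d \<in> V" using xa adjV by auto
  have ax: "adj a x" "adj b x" "adj c x" "adj d x" using xa sym by auto
  have ba: "adj b a" "adj d c" using e sym by auto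
  have Ca: "C a \<le> 9"
  proof -
    have "C a \<le> (f x - 2*f a + f x)^2 + (f b - 2*f a + f x)^2 + 4"
      unfolding C_def
    proof (rule ybound(2)[OF V(1) ax(1) e(1) xs(2)[symmetric]])
      fix z assume "z \<in> N a - {x, b}"
      then have z: "adj a z" "z \<noteq> x" "z \<noteq> b" "z \<noteq> a" using memN by auto
      show "0 \<le> (f z - 2 * f a + f x)\<^sup>2 \<and> (f z - 2 * f a + f x)\<^sup>2 \<le> 4"
        using fab[OF z(1) _ z(2,4,3)] fx by auto
    next
      have "z0 \<in> N a - {x,b}" using z0 memN by auto
      moreover have "z0 \<noteq> a" using z0 by auto
      moreover have "f z0 = 2" using fab[of a z0] z0 nz \<open>z0 \<noteq> a\<close> by auto
      moreover have "(f z0 - 2 * f a + f x)^2 = 0" using \<open>f z0 = 2\<close> fx by simp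
      ultimately show "\<exists>z\<in>N a - {x, b}. (f z - 2 * f a + f x)\<^sup>2 = 0" by blast
    qed
    then show ?thesis using fx by simp
  qed
  have Cb: "C b \<le> 13"
  proof -
    have "C b \<le> (f x - 2*f b + f x)^2 + (f a - 2*f b + f x)^2 + 8"
      unfolding C_def
    proof (rule ybound(1)[OF V(2) ax(2) ba(1) xs(1)[symmetric]])
      fix z assume "z \<in> N b - {x, a}"
      then have z: "adj b z" "z \<noteq> x" "z \<noteq> a" "z \<noteq> b" using memN by auto
      show "0 \<le> (f z - 2 * f b + f x)\<^sup>2 \<and> (f z - 2 * f b + f x)\<^sup>2 \<le> 4"
        using fab[OF z(1) _ z(2,3,4)] fx by auto
    qed
    then show ?thesis using fx by simp
  qed
  have Cc: "C c \<le> 13"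
  proof -
    have "C c \<le> (f x - 2*f c + f x)^2 + (f d - 2*f c + f x)^2 + 8"
      unfolding C_def
    proof (rule ybound(1)[OF V(3) ax(3) e(2) xs(4)[symmetric]])
      fix z assume "z \<in> N c - {x, d}"
      then have z: "adj c z" "z \<noteq> x" "z \<noteq> d" "z \<noteq> c" using memN by auto
      show "0 \<le> (f z - 2 * f c + f x)\<^sup>2 \<and> (f z - 2 * f c + f x)\<^sup>2 \<le> 4"
        using fcd[OF z(1) _ z(2,4,3)] fx by auto
    qed
    then show ?thesis using fx by simp
  qed
  have Cd: "C d \<le> 13"
  proof -
    have "C d \<le> (f x - 2*f d + f x)^2 + (f c - 2*f d + f x)^2 + 8"
      unfolding C_def
    proof (rule ybound(1)[OF V(4) ax(4) ba(2) xs(3)[symmetric]])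
      fix z assume "z \<in> N d - {x, c}"
      then have z: "adj d z" "z \<noteq> x" "z \<noteq> c" "z \<noteq> d" using memN by auto
      show "0 \<le> (f z - 2 * f d + f x)\<^sup>2 \<and> (f z - 2 * f d + f x)\<^sup>2 \<le> 4"
        using fcd[OF z(1) _ z(2,3,4)] fx by auto
    qed
    then show ?thesis using fx by simp
  qed
  have S: "(\<Sum>y\<in>N x. C y) = C a + C b + C c + C d" unfolding Nx using dis by simp
  have S1: "(\<Sum>y\<in>N x. (f y - f x)^2) = 4" unfolding Nx using dis fx by simp
  have S2: "(\<Sum>y\<in>N x. f y - f x) = 0" unfolding Nx using dis fx by simp
  have "4 * Gam2 V adj f f x = (\<Sum>y\<in>N x. C y) - 32"
    using Gam2_eq[OF x, of f] S1 S2 unfolding C_def by simp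
  moreover have "2 * Gam V adj f f x = 4" using Gam_eq2[of f x] S1 by simp
  ultimately show False using sh[of f] S Ca Cb Cc Cd by linarith
qed


lemma outer:
  assumes x: "x \<in> V" and Nx: "N x = {a,b,c,d}" and dis: "a \<noteq> b" "a \<noteq> c" "a \<noteq> d" "b \<noteq> c" "b \<noteq> d" "c \<noteq> d"
     and e: "adj a b" "adj c d" and ne: "\<not> adj a c" "\<not> adj a d" "\<not> adj b c" "\<not> adj b d"
     and T: "\<And>z. adj a z \<Longrightarrow> z \<noteq> x \<Longrightarrow> z \<noteq> b \<Longrightarrow> adj z c \<or> adj z d"
  shows "\<exists>p q. N a = {x,b,p,q} \<and> p \<noteq> q \<and> adj p c \<and> adj q d \<and> \<not> adj p d \<and> \<not> adj q c \<and> adj p q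
     \<and> p \<noteq> x \<and> p \<noteq> a \<and> p \<noteq> b \<and> p \<noteq> c \<and> p \<noteq> d \<and> q \<noteq> x \<and> q \<noteq> a \<and> q \<noteq> b \<and> q \<noteq> c \<and> q \<noteq> d"
proof -
  have xa: "adj x a" "adj x b" "adj x c" "adj x d" using Nx memN by auto
  have aV: "a \<in> V" using xa adjV by blast
  have xN: "x \<in> N a" "b \<in> N a" using xa e sym memN by auto
  have "x \<noteq> b" using xa by auto
  have "card (N a - {x,b}) = 2" using cardN[OF aV] xN \<open>x \<noteq> b\<close> by (simp add: card_Diff_subset)
  then obtain p q where pq: "N a - {x,b} = {p,q}" "p \<noteq> q" by (auto simp: card_2_iff)
  then have p: "adj a p" "p \<noteq> x" "p \<noteq> b" and q: "adj a q" "q \<noteq> x" "q \<noteq> b" using memN by auto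
  have Na: "N a = {x,b,p,q}" using pq xN by auto
  have p2: "p \<noteq> a" "p \<noteq> c" "p \<noteq> d" using p ne by auto
  have q2: "q \<noteq> a" "q \<noteq> c" "q \<noteq> d" using q ne by auto
  have pqa: "adj p q" using pair_rest[OF Na] \<open>x \<noteq> b\<close> p q pq(2) xa(2) by auto
  have Tp: "adj p c \<or> adj p d" using T p by blast
  have Tq: "adj q c \<or> adj q d" using T q by blast
  have n1: "\<not> (adj p c \<and> adj q c)"
  proof
    assume "adj p c \<and> adj q c"
    then have "a = c" using uniq_common[OF pqa, of a c] p q sym by blast
    then show False using dis by simp
  qed
  have n2: "\<not> (adj p d \<and> adj q d)"
  proof
    assume "adj p d \<and> adj q d"
    then have "a = d" using uniq_common[OF pqa, of a d] p q sym by blast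
    then show False using dis by simp
  qed
  have n3: "\<not> (adj p c \<and> adj p d)"
  proof
    assume "adj p c \<and> adj p d"
    then have "x = p" using uniq_common[OF e(2), of x p] xa sym by blast
    then show False using p by simp
  qed
  have n4: "\<not> (adj q c \<and> adj q d)"
  proof
    assume "adj q c \<and> adj q d"
    then have "x = q" using uniq_common[OF e(2), of x q] xa sym by blast
    then show False using q by simp
  qed
  show ?thesis
  proof (cases "adj p c")
    case True
    then show ?thesis using Na pq(2) n1 n2 n3 n4 Tp Tq pqa p q p2 q2 by blast
  next
    case False
    have "N a = {x,b,q,p}" using Na by auto
    moreover have "adj q p" using pqa sym by blast
    ultimately show ?thesis using False pq(2) n1 n2 n3 n4 Tp Tq p q p2 q2 by blast
  qed
qed

lemma N4:
  assumes "u \<in> V" "adj u w1" "adj u w2" "adj u w3" "adj u w4"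
    "w1 \<noteq> w2" "w1 \<noteq> w3" "w1 \<noteq> w4" "w2 \<noteq> w3" "w2 \<noteq> w4" "w3 \<noteq> w4"
  shows "N u = {w1,w2,w3,w4}"
proof -
  have "{w1,w2,w3,w4} \<subseteq> N u" using assms memN by auto
  moreover have "card {w1,w2,w3,w4} = card (N u)" using assms cardN by simp
  ultimately show ?thesis by (intro card_subset_eq[symmetric]) auto
qed

end

theorem mainTheorem4:
  fixes V :: "'a set" and adj :: "'a \<Rightarrow> 'a \<Rightarrow> bool"
  assumes "simple_graph V adj"
    and "connected_graph V adj"
    and "regular V adj 4"
    and "\<forall>x\<in>V. curvature_sharp V adj 4 x"
    and "edge_in_unique_triangle V adj"
  shows "graph_iso V adj K3K3_V K3K3_adj"
proof -
  interpret G V adj using assms(1,3,5) by unfold_locales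
  obtain x where x: "x \<in> V" using assms(2) unfolding connected_graph_def by blast
  obtain a b c d where Nx: "N x = {a,b,c,d}" and dis: "a \<noteq> b" "a \<noteq> c" "a \<noteq> d" "b \<noteq> c" "b \<noteq> d" "c \<noteq> d"
     and e: "adj a b" "adj c d" and ne: "\<not> adj a c" "\<not> adj a d" "\<not> adj b c" "\<not> adj b d"
    using local_str[OF x] by blast
  have "num_triangles V adj x = 2" using num_tri[OF Nx dis e ne] .
  then have K: "K_inf V adj x = 5/2" using assms(4) x unfolding curvature_sharp_def by simp
  have sh: "\<And>f. 5/2 * Gam V adj f f x \<le> Gam2 V adj f f x" using sharp_ineq[OF x K] .
  have T1: "\<And>z. adj a z \<Longrightarrow> z \<noteq> x \<Longrightarrow> z \<noteq> b \<Longrightarrow> adj z c \<or> adj z d"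
    using test[OF x Nx dis e ne sh] by blast
  obtain p q where pq: "N a = {x,b,p,q}" "p \<noteq> q" "adj p c" "adj q d" "\<not> adj p d" "\<not> adj q c" "adj p q"
     "p \<noteq> x" "p \<noteq> a" "p \<noteq> b" "p \<noteq> c" "p \<noteq> d" "q \<noteq> x" "q \<noteq> a" "q \<noteq> b" "q \<noteq> c" "q \<noteq> d"
    using outer[OF x Nx dis e ne T1] by blast
  have Nx': "N x = {b,a,c,d}" using Nx by auto
  have dis': "b \<noteq> a" "b \<noteq> c" "b \<noteq> d" "a \<noteq> c" "a \<noteq> d" "c \<noteq> d" using dis by auto
  have e': "adj b a" "adj c d" using e sym by auto
  have ne': "\<not> adj b c" "\<not> adj b d" "\<not> adj a c" "\<not> adj a d" using ne by auto
  have T2: "\<And>z. adj b z \<Longrightarrow> z \<noteq> x \<Longrightarrow> z \<noteq> a \<Longrightarrow> adj z c \<or> adj z d"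
    using test[OF x Nx' dis' e' ne' sh] by blast
  obtain r s where rs: "N b = {x,a,r,s}" "r \<noteq> s" "adj r c" "adj s d" "\<not> adj r d" "\<not> adj s c" "adj r s"
     "r \<noteq> x" "r \<noteq> b" "r \<noteq> a" "r \<noteq> c" "r \<noteq> d" "s \<noteq> x" "s \<noteq> b" "s \<noteq> a" "s \<noteq> c" "s \<noteq> d"
    using outer[OF x Nx' dis' e' ne' T2] by blast
  have xa: "adj x a" "adj x b" "adj x c" "adj x d" using Nx memN by auto
  have xs: "x \<noteq> a" "x \<noteq> b" "x \<noteq> c" "x \<noteq> d" using xa by auto
  have ap: "adj a p" "adj a q" "adj b r" "adj b s" using pq(1) rs(1) memN by auto
  have pr: "p \<noteq> r" "p \<noteq> s" "q \<noteq> r" "q \<noteq> s"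
    using uniq_common[OF e(1), of x p] uniq_common[OF e(1), of x q] xa ap sym pq rs by metis+
  have V: "a \<in> V" "b \<in> V" "c \<in> V" "d \<in> V" "p \<in> V" "q \<in> V" "r \<in> V" "s \<in> V" using xa ap adjV by auto
  note D = dis xs pq(2,8-17) rs(2,8-17) pr
  note DD = D D[THEN not_sym]
  have Nc: "N c = {x,d,p,r}" using N4[OF V(3)] xa e pq rs sym DD by metis
  have Nd: "N d = {x,c,q,s}" using N4[OF V(4)] xa e pq rs sym DD by metis
  have prr: "adj p r" using pair_rest[OF Nc] xa e DD by auto
  have qss: "adj q s" using pair_rest[OF Nd] xa e DD by auto
  have Np: "N p = {a,c,q,r}" using N4[OF V(5)] ap pq prr sym DD by metis
  have Nq: "N q = {a,d,p,s}" using N4[OF V(6)] ap pq qss sym DD by metis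
  have Nr: "N r = {b,c,p,s}" using N4[OF V(7)] ap rs prr sym DD by metis
  have Ns: "N s = {b,d,q,r}" using N4[OF V(8)] ap rs qss sym DD by metis
  have Na: "N a = {x,b,p,q}" and Nb: "N b = {x,a,r,s}" using pq rs by auto
  define B where "B = {x,a,b,c,d,p,q,r,s}"
  have BV: "B = V"
  proof
    show "B \<subseteq> V" unfolding B_def using x V by auto
    show "V \<subseteq> B"
    proof
      fix v assume v: "v \<in> V"
      have "(\<lambda>u v. u \<in> V \<and> v \<in> V \<and> adj u v)\<^sup>*\<^sup>* x v" using assms(2) x v unfolding connected_graph_def by blast
      then show "v \<in> B"
      proof (induction rule: rtranclp_induct)
        case base then show ?case unfolding B_def by simp
      next
        case (step y z)
        then have "z \<in> N y" using memN by blast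
        moreover have "\<forall>y\<in>B. N y \<subseteq> B" unfolding B_def by (simp add: Nx Na Nb Nc Nd Np Nq Nr Ns)
        ultimately show ?case using step(3) by blast
      qed
    qed
  qed
  have adjc: "\<And>u v. adj u v \<longleftrightarrow> v \<in> N u" using memN by blast
  define g where "g v = (if v = x then (0::nat,0::nat) else if v = a then (0,1) else if v = b then (0,2)
     else if v = c then (1,0) else if v = d then (2,0) else if v = p then (1,1) else if v = q then (2,1)
     else if v = r then (1,2) else (2,2))" for v
  have gv: "g x = (0,0)" "g a = (0,1)" "g b = (0,2)" "g c = (1,0)" "g d = (2,0)" "g p = (1,1)"
     "g q = (2,1)" "g r = (1,2)" "g s = (2,2)" unfolding g_def by (simp_all add: DD)
  have K3: "K3K3_V = {(0,0),(0,1),(0,2),(1,0),(2,0),(1,1),(2,1),(1,2),(2,2)}"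
  proof -
    have e3: "{0..2::nat} = {0,1,2}" by auto
    show ?thesis unfolding K3K3_V_def e3 by auto
  qed
  have bij: "bij_betw g V K3K3_V"
  proof -
    have "inj_on g B" unfolding B_def by (simp add: gv DD)
    moreover have "g ` B = K3K3_V" unfolding B_def K3 by (simp add: gv)
    ultimately show ?thesis unfolding bij_betw_def BV by simp
  qed
  have A: "\<And>v. adj x v \<longleftrightarrow> v \<in> {a,b,c,d}" "\<And>v. adj a v \<longleftrightarrow> v \<in> {x,b,p,q}"
    "\<And>v. adj b v \<longleftrightarrow> v \<in> {x,a,r,s}" "\<And>v. adj c v \<longleftrightarrow> v \<in> {x,d,p,r}"
    "\<And>v. adj d v \<longleftrightarrow> v \<in> {x,c,q,s}" "\<And>v. adj p v \<longleftrightarrow> v \<in> {a,c,q,r}"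
    "\<And>v. adj q v \<longleftrightarrow> v \<in> {a,d,p,s}" "\<And>v. adj r v \<longleftrightarrow> v \<in> {b,c,p,s}"
    "\<And>v. adj s v \<longleftrightarrow> v \<in> {b,d,q,r}"
    using adjc Nx Na Nb Nc Nd Np Nq Nr Ns by simp_all
  have iso0: "\<forall>u\<in>B. \<forall>v\<in>B. adj u v \<longleftrightarrow> K3K3_adj (g u) (g v)"
    unfolding B_def by (simp add: A gv DD K3K3_adj_def)
  have iso: "\<forall>u\<in>V. \<forall>v\<in>V. adj u v \<longleftrightarrow> K3K3_adj (g u) (g v)" using iso0 BV by simp
  show ?thesis unfolding graph_iso_def using bij iso by blast
qed

end
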